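(* If a policy in $\Pi$ satisfies $$\sum_{l=1}^m f_{l,\eta}\le\frac{\sum_{l=1}^m\mu_{\eta(l)}}{\sum_{l=1}^n\mu_{l}}\qquad\text{for all }m\in[n],\ \eta\in\mathcal S_n,$$ then it is throughput optimal, i.e. the Markov chain $\{\mathbf X(t)\}_{t\ge0}$ is positive recurrent for every arrival process (as in the model) with $n\lambda<\sum_{l=1}^n\mu_l$.
   Context: Model. Fix $n\ge1$, $[n]=\{1,\dots,n\}$, $\mathcal S_n$ the set of permutations of $[n]$, $e_1,\dots,e_n$ the standard basis of $\mathbb R^n$. Time is discrete, $t=0,1,2,\dots$. There are $n$ single-server FIFO queues with infinite buffers; $\mathbf Q(t)\in\mathbb Z_{\ge0}^n$ is the queue-length vector at the start of slot $t$. Arrivals $A(t)\in\mathbb Z_{\ge0}$ are i.i.d. over $t$ with $E[A(1)]=n\lambda$, $\mathrm{Var}(A(1))=n\sigma_\lambda^2$, $A(1)\le nA_{\max}$ a.s. Potential services $\mathbf S(t)\in\mathbb Z_{\ge0}^n$ are i.i.d. over $t$, independent of arrivals, with $E[S_l(1)]=\mu_l>0$, $\mathrm{Var}(S_l(1))=\sigma_l^2$, $S_l(1)\le S_{\max}$ a.s., and $\mu_1\le\dots\le\mu_n$. All $A(t)$ arrivals of slot $t$ go to one queue, encoded by $\mathbf Z(t)\in\{e_1,\dots,e_n\}$, and $\mathbf Q(t+1)=[\mathbf Q(t)+A(t)\mathbf Z(t)-\mathbf S(t)]^+=\mathbf Q(t)+A(t)\mathbf Z(t)-\mathbf S(t)+\mathbf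 U(t)$, where $\mathbf U(t)\ge0$ is the unused service ($0\le U_l(t)\le S_l(t)$, $Q_l(t+1)U_l(t)=0$). Policy class $\Pi$. A policy is given by an integer $T\ge1$, a vector $\boldsymbol\gamma\in(0,\infty)^n$, a sorting map $L$ and a decision map $Y$. Let $\{V_k\},\{W_k\}$ be i.i.d. Unif$[0,1]$ sequences, independent of each other and of arrivals and services. At each sampling time $kT$ the dispatcher forms a permutation $\eta_k=L\big((Q_l(kT)/\gamma_l)_{l=1}^n,V_k\big)\in\mathcal S_n$ satisfying $Q_{\eta_k(1)}(kT)/\gamma_{\eta_k(1)}\ge\dots\ge Q_{\eta_k(n)}(kT)/\gamma_{\eta_k(n)}$ ($\eta_k(l)$ is the index of the $l$-th longest scaled queue), then draws $\phi(k)=Y(\eta_k,\boldsymbol\mu,W_k)=(\phi_1(k),\dots,\phi_T(k))\in\{e_1,\dots,e_n\}^T$, and sets $\mathbf Z(kT+j)=\phi_{j+1}(k)$ for $j=0,\dots,T-1$. The process $\mathbf X(t)=(\mathbf Q(t),\phi(\lfloor t/T\rfloor),t-T\lfloor t/T\rfloor)$ is a discrete-time Markov chain. Dispatching statistics. For $\eta\in\mathcal S_n$, $l\in[n]$, let $N_\eta(l)=\sum_{j=1}^T(\phi_j)_{\eta(l)}$ where $\phi=Y(\eta,\boldsymbol\mu,W)$, $W\sim$ Unif$[0,1]$. Define $f_{l,\eta}=E[N_\eta(l)/T]$; thus $f_{l,\eta}\ge0$ and $\sum_l f_{l,\eta}=1$. *)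

theory Defs
  imports "HOL-Probability.Probability" "HOL-Combinatorics.Permutations"
begin

(* Queues are indexed 0..<n (paper: 1..n).  A state of the chain X(t) is
   (Q, phi, r): queue-length vector (entries at indices >= n are 0),
   the current dispatching list phi (entry j-1 of the list is the index of the
   queue receiving the arrivals of the j-th slot of the frame), and the phase
   r = t - T*floor(t/T). *)
type_synonym state = "(nat \<Rightarrow> nat) \<times> nat list \<times> nat"

definition queue_update ::
  "nat \<Rightarrow> (nat \<Rightarrow> nat) \<Rightarrow> nat \<Rightarrow> nat \<Rightarrow> (nat \<Rightarrow> nat) \<Rightarrow> (nat \<Rightarrow> nat)" where
  "queue_update n Q a j s = (\<lambda>i. if i < n then (Q i + (if i = j then a else 0)) - s i else 0)"

definition service_rate :: "(nat \<Rightarrow> nat) pmf \<Rightarrow> nat \<Rightarrow> real" where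
  "service_rate S l = measure_pmf.expectation S (\<lambda>s. real (s l))"

definition dispatch_frac ::
  "nat \<Rightarrow> ((nat \<Rightarrow> nat) \<Rightarrow> (nat \<Rightarrow> real) \<Rightarrow> nat list pmf) \<Rightarrow> (nat \<Rightarrow> real)
     \<Rightarrow> nat \<Rightarrow> (nat \<Rightarrow> nat) \<Rightarrow> real" where
  "dispatch_frac T Y \<mu> l \<eta> =
     measure_pmf.expectation (Y \<eta> \<mu>) (\<lambda>\<phi>. real (length (filter (\<lambda>j. j = \<eta> l) \<phi>)) / real T)"

(* Sorting map: randomized (the distribution of L(q, V) for V ~ Unif[0,1]);
   every outcome is a permutation of [n] sorting q in nonincreasing order. *)
definition valid_sorting :: "nat \<Rightarrow> ((nat \<Rightarrow> real) \<Rightarrow> (nat \<Rightarrow> nat) pmf) \<Rightarrow> bool" where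
  "valid_sorting n L \<longleftrightarrow>
     (\<forall>q \<eta>. \<eta> \<in> set_pmf (L q) \<longrightarrow>
        \<eta> permutes {..<n} \<and> (\<forall>i j. i \<le> j \<and> j < n \<longrightarrow> q (\<eta> j) \<le> q (\<eta> i)))"

(* Decision map: randomized (distribution of Y(eta, mu, W) for W ~ Unif[0,1]);
   outcomes are elements of {e_1..e_n}^T, encoded as lists of indices of length T. *)
definition valid_decision ::
  "nat \<Rightarrow> nat \<Rightarrow> ((nat \<Rightarrow> nat) \<Rightarrow> (nat \<Rightarrow> real) \<Rightarrow> nat list pmf) \<Rightarrow> (nat \<Rightarrow> real) \<Rightarrow> bool" where
  "valid_decision n T Y \<mu> \<longleftrightarrow>
     (\<forall>\<eta>. \<eta> permutes {..<n} \<longrightarrow>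
        (\<forall>\<phi> \<in> set_pmf (Y \<eta> \<mu>). length \<phi> = T \<and> (\<forall>j\<in>set \<phi>. j < n)))"

definition policy_kernel ::
  "nat \<Rightarrow> nat pmf \<Rightarrow> (nat \<Rightarrow> nat) pmf \<Rightarrow> nat \<Rightarrow> (nat \<Rightarrow> real)
     \<Rightarrow> ((nat \<Rightarrow> real) \<Rightarrow> (nat \<Rightarrow> nat) pmf)
     \<Rightarrow> ((nat \<Rightarrow> nat) \<Rightarrow> (nat \<Rightarrow> real) \<Rightarrow> nat list pmf)
     \<Rightarrow> state \<Rightarrow> state pmf" where
  "policy_kernel n A S T \<gamma> L Y = (\<lambda>(Q, \<phi>, r).
     bind_pmf A (\<lambda>a. bind_pmf S (\<lambda>s.
       let Q' = queue_update n Q a (\<phi> ! r) s in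
       if Suc r < T then return_pmf (Q', \<phi>, Suc r)
       else bind_pmf (L (\<lambda>i. real (Q' i) / \<gamma> i)) (\<lambda>\<eta>.
              bind_pmf (Y \<eta> (service_rate S)) (\<lambda>\<phi>'. return_pmf (Q', \<phi>', 0))))))"

definition state_space :: "nat \<Rightarrow> nat \<Rightarrow> state set" where
  "state_space n T = {(Q, \<phi>, r). (\<forall>i\<ge>n. Q i = 0) \<and> r < T \<and> length \<phi> = T \<and> (\<forall>j\<in>set \<phi>. j < n)}"

(* nonhit K C k x = P_x(X_1 \<notin> C, ..., X_k \<notin> C) for the chain with kernel K *)
fun nonhit :: "('s \<Rightarrow> 's pmf) \<Rightarrow> 's set \<Rightarrow> nat \<Rightarrow> 's \<Rightarrow> real" where
  "nonhit K C 0 x = 1"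
| "nonhit K C (Suc k) x =
     measure_pmf.expectation (K x) (\<lambda>y. if y \<in> C then 0 else nonhit K C k y)"

(* Positive recurrence (Foster sense): there is a finite set C of states whose
   hitting time tau_C = min{t >= 1 : X(t) \<in> C} has finite mean,
   E_x[tau_C] = sum_k P_x(tau_C > k) < \<infinity>, from every state x. *)
definition positive_recurrent :: "('s \<Rightarrow> 's pmf) \<Rightarrow> 's set \<Rightarrow> bool" where
  "positive_recurrent K Sp \<longleftrightarrow>
     (\<exists>C. finite C \<and> C \<subseteq> Sp \<and> (\<forall>x\<in>Sp. summable (\<lambda>k. nonhit K C k x)))"

end

theory Submission
  imports Defs
begin


lemma pmf_integrable_bounded:
  fixes f :: "'a \<Rightarrow> real"
  assumes "\<And>x. x \<in> set_pmf M \<Longrightarrow> \<bar>f x\<bar> \<le> B"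
  shows "integrable (measure_pmf M) f"
  by (rule measure_pmf.integrable_const_bound[where B=B]) (auto intro!: AE_pmfI assms)

lemma expectation_bind_fin:
  fixes f :: "'b \<Rightarrow> real"
  assumes fin: "finite (set_pmf (bind_pmf M N))"
  shows "measure_pmf.expectation (bind_pmf M N) f
       = measure_pmf.expectation M (\<lambda>x. measure_pmf.expectation (N x) f)"
proof -
  define F where "F = set_pmf (bind_pmf M N)"
  define g where "g z = (if z \<in> F then f z else 0)" for z
  define B where "B = (\<Sum>z\<in>F. \<bar>f z\<bar>)"
  have gb: "\<bar>g z\<bar> \<le> B" for z
    unfolding g_def B_def using fin F_def
    by (auto intro: member_le_sum)
  have "measure_pmf.expectation (bind_pmf M N) f = measure_pmf.expectation (bind_pmf M N) g"
    by (rule integral_cong_AE) (auto intro!: AE_pmfI simp: g_def F_def)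
  also have "\<dots> = integral\<^sup>L (measure_pmf M \<bind> (\<lambda>x. measure_pmf (N x))) g"
    by (simp add: measure_pmf_bind)
  also have "\<dots> = \<integral>x. integral\<^sup>L (measure_pmf (N x)) g \<partial>measure_pmf M"
    by (rule integral_bind[where K="count_space UNIV" and B=B and B'=1])
       (auto simp: gb measure_subprob measure_pmf.emeasure_space_1 measure_pmf.finite_measure_axioms
          intro!: measurable_measure_pmf AE_pmfI)
  also have "\<dots> = measure_pmf.expectation M (\<lambda>x. measure_pmf.expectation (N x) f)"
    by (rule integral_cong_AE)
       (auto intro!: AE_pmfI integral_cong_AE simp: g_def F_def)
  finally show ?thesis .
qed


lemma nonhit_nonneg: "0 \<le> nonhit K C k x"
  by (induction k arbitrary: x) (auto intro!: integral_nonneg)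

lemma foster:
  fixes K :: "'s \<Rightarrow> 's pmf" and W :: "'s \<Rightarrow> real"
  assumes fin: "\<And>x. x \<in> Sp \<Longrightarrow> finite (set_pmf (K x))"
    and clo: "\<And>x. x \<in> Sp \<Longrightarrow> set_pmf (K x) \<subseteq> Sp"
    and lb: "\<And>x. x \<in> Sp \<Longrightarrow> W x \<ge> - b"
    and drift: "\<And>x. x \<in> Sp \<Longrightarrow> x \<notin> C \<Longrightarrow> measure_pmf.expectation (K x) W \<le> W x - 1"
    and Cfin: "finite C" and CSp: "C \<subseteq> Sp"
  shows "positive_recurrent K Sp"
proof -
  have step: "(\<Sum>j<Suc k. nonhit K C j x)
      = 1 + measure_pmf.expectation (K x) (\<lambda>y. if y \<in> C then 0 else (\<Sum>j<k. nonhit K C j y))"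
    if "x \<in> Sp" for k x
  proof -
    have "(\<Sum>j<Suc k. nonhit K C j x) = 1 + (\<Sum>j<k. nonhit K C (Suc j) x)"
      by (subst sum.lessThan_Suc_shift) simp
    also have "(\<Sum>j<k. nonhit K C (Suc j) x)
        = (\<Sum>j<k. measure_pmf.expectation (K x) (\<lambda>y. if y \<in> C then 0 else nonhit K C j y))"
      by simp
    also have "\<dots> = measure_pmf.expectation (K x) (\<lambda>y. \<Sum>j<k. if y \<in> C then 0 else nonhit K C j y)"
      by (subst Bochner_Integration.integral_sum) (auto intro: integrable_measure_pmf_finite fin that)
    also have "(\<lambda>y. \<Sum>j<k. if y \<in> C then 0 else nonhit K C j y)
        = (\<lambda>y. if y \<in> C then 0 else (\<Sum>j<k. nonhit K C j y))"
      by auto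
    finally show ?thesis .
  qed
  have main: "\<forall>x\<in>Sp. x \<notin> C \<longrightarrow> (\<Sum>j<k. nonhit K C j x) \<le> W x + b" for k
  proof (induction k)
    case 0
    then show ?case using lb by fastforce
  next
    case (Suc k)
    show ?case
    proof (intro ballI impI)
      fix x assume x: "x \<in> Sp" "x \<notin> C"
      have "(\<Sum>j<Suc k. nonhit K C j x)
        = 1 + measure_pmf.expectation (K x) (\<lambda>y. if y \<in> C then 0 else (\<Sum>j<k. nonhit K C j y))"
        using step x by blast
      also have "\<dots> \<le> 1 + measure_pmf.expectation (K x) (\<lambda>y. W y + b)"
        using Suc.IH clo[OF x(1)] lb
        by (intro add_left_mono integral_mono_AE AE_pmfI integrable_measure_pmf_finite fin x)
           (force simp: add.commute)+
      also have "\<dots> = 1 + measure_pmf.expectation (K x) W + b"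
        by (simp add: integrable_measure_pmf_finite fin x measure_pmf.prob_space)
      also have "\<dots> \<le> W x + b" using drift[OF x] by simp
      finally show "(\<Sum>j<Suc k. nonhit K C j x) \<le> W x + b" .
    qed
  qed
  have "summable (\<lambda>k. nonhit K C k x)" if x: "x \<in> Sp" for x
  proof (rule bounded_imp_summable[where B="1 + measure_pmf.expectation (K x) (\<lambda>y. W y + b)"])
    show "0 \<le> nonhit K C k x" for k by (rule nonhit_nonneg)
    fix k
    have "(\<Sum>j\<le>k. nonhit K C j x) = (\<Sum>j<Suc k. nonhit K C j x)"
      using lessThan_Suc_atMost by presburger
    also have "\<dots> = 1 + measure_pmf.expectation (K x) (\<lambda>y. if y \<in> C then 0 else (\<Sum>j<k. nonhit K C j y))"
      using step x by blast
    also have "\<dots> \<le> 1 + measure_pmf.expectation (K x) (\<lambda>y. W y + b)"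
      using main[of k] clo[OF x] lb
      by (intro add_left_mono integral_mono_AE AE_pmfI integrable_measure_pmf_finite fin x)
         (force simp: add.commute)+
    finally show "(\<Sum>j\<le>k. nonhit K C j x) \<le> 1 + measure_pmf.expectation (K x) (\<lambda>y. W y + b)" .
  qed
  then show ?thesis unfolding positive_recurrent_def using Cfin CSp by blast
qed

lemma abel:
  fixes y c :: "nat \<Rightarrow> real"
  assumes n: "n \<ge> 1" and mono: "\<forall>i j. i \<le> j \<and> j < n \<longrightarrow> y j \<le> y i"
    and nn: "\<forall>i<n. y i \<ge> 0" and P: "\<forall>m\<in>{1..n}. (\<Sum>i<m. c i) \<le> - \<delta>"
  shows "(\<Sum>i<n. y i * c i) \<le> - \<delta> * y 0"
proof -
  have inv: "Suc m \<le> n \<Longrightarrow> (\<Sum>i<Suc m. y i * c i) \<le> y m * ((\<Sum>i<Suc m. c i) + \<delta>) - \<delta> * y 0" for m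
  proof (induction m)
    case 0
    then show ?case by (simp add: algebra_simps)
  next
    case (Suc m)
    have IH: "(\<Sum>i<Suc m. y i * c i) \<le> y m * ((\<Sum>i<Suc m. c i) + \<delta>) - \<delta> * y 0"
      using Suc by simp
    have "Suc m \<in> {1..n}" using Suc.prems by auto
    then have "(\<Sum>i<Suc m. c i) \<le> - \<delta>" using P by blast
    then have "(\<Sum>i<Suc m. c i) + \<delta> \<le> 0" by linarith
    moreover have "y (Suc m) \<le> y m" using mono Suc.prems by auto
    ultimately have "y m * ((\<Sum>i<Suc m. c i) + \<delta>) \<le> y (Suc m) * ((\<Sum>i<Suc m. c i) + \<delta>)"
      by (simp add: mult_right_mono_neg)
    then show ?case using IH by (simp add: algebra_simps)
  qed
  obtain m where m: "n = Suc m" using n by (cases n) auto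
  have h1: "(\<Sum>i<n. y i * c i) \<le> y m * ((\<Sum>i<n. c i) + \<delta>) - \<delta> * y 0"
    using inv[of m] m by simp
  have "(\<Sum>i<n. c i) \<le> - \<delta>" using P n by auto
  then have h2: "(\<Sum>i<n. c i) + \<delta> \<le> 0" by linarith
  have h3: "y m \<ge> 0" using nn m by auto
  have "y m * ((\<Sum>i<n. c i) + \<delta>) \<le> 0" using h3 h2 by (rule mult_nonneg_nonpos)
  then show ?thesis using h1 by linarith
qed

lemma finite_bind_sub:
  "finite (set_pmf (bind_pmf M N)) \<Longrightarrow> x \<in> set_pmf M \<Longrightarrow> finite (set_pmf (N x))"
  by (auto simp: set_bind_pmf intro: finite_subset)

lemma fin_bounded_states: "finite {z \<in> state_space n T. \<forall>l<n. fst z l \<le> M}"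
proof -
  let ?f = "\<lambda>(xs::nat list, \<phi>::nat list, r::nat). ((\<lambda>i. if i < n then xs ! i else 0), \<phi>, r)"
  have "{z \<in> state_space n T. \<forall>l<n. fst z l \<le> M} \<subseteq>
     ?f ` ({xs. set xs \<subseteq> {..M} \<and> length xs = n} \<times> {\<phi>. set \<phi> \<subseteq> {..<n} \<and> length \<phi> = T} \<times> {..<T})"
  proof
    fix z assume z: "z \<in> {z \<in> state_space n T. \<forall>l<n. fst z l \<le> M}"
    obtain Q \<phi> r where zz: "z = (Q, \<phi>, r)" by (cases z) auto
    have Q: "Q = (\<lambda>i. if i < n then map Q [0..<n] ! i else 0)"
      using z zz by (auto simp: state_space_def)
    show "z \<in> ?f ` ({xs. set xs \<subseteq> {..M} \<and> length xs = n} \<times> {\<phi>. set \<phi> \<subseteq> {..<n} \<and> length \<phi> = T} \<times> {..<T})"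
      using z zz
      by (intro image_eqI[where x="(map Q [0..<n], \<phi>, r)"]) (auto simp: state_space_def intro: Q)
  qed
  moreover have "finite (?f ` ({xs. set xs \<subseteq> {..M} \<and> length xs = n} \<times> {\<phi>. set \<phi> \<subseteq> {..<n} \<and> length \<phi> = T} \<times> {..<T}))"
    by (intro finite_imageI finite_cartesian_product finite_lists_length_eq) auto
  ultimately show ?thesis by (rule finite_subset)
qed



locale qs =
  fixes n T :: nat and A :: "nat pmf" and S :: "(nat \<Rightarrow> nat) pmf"
    and \<gamma> :: "nat \<Rightarrow> real"
    and L :: "(nat \<Rightarrow> real) \<Rightarrow> (nat \<Rightarrow> nat) pmf"
    and Y :: "(nat \<Rightarrow> nat) \<Rightarrow> (nat \<Rightarrow> real) \<Rightarrow> nat list pmf"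
    and Am Sm :: nat
  assumes n_pos: "n \<ge> 1"
    and Abd: "\<forall>a\<in>set_pmf A. a \<le> Am"
    and Sbd: "\<forall>s\<in>set_pmf S. \<forall>l<n. s l \<le> Sm"
    and mu_pos: "\<forall>l<n. service_rate S l > 0"
    and mu_sorted: "\<forall>l m. l \<le> m \<and> m < n \<longrightarrow> service_rate S l \<le> service_rate S m"
    and T_pos: "T \<ge> 1"
    and gamma_pos: "\<forall>l<n. \<gamma> l > 0"
    and L_valid: "valid_sorting n L"
    and Y_valid: "valid_decision n T Y (service_rate S)"
    and cond: "\<forall>\<eta>. \<eta> permutes {..<n} \<longrightarrow> (\<forall>m\<in>{1..n}.
                 (\<Sum>l<m. dispatch_frac T Y (service_rate S) l \<eta>)
                   \<le> (\<Sum>l<m. service_rate S (\<eta> l)) / (\<Sum>l<n. service_rate S l))"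
    and load: "measure_pmf.expectation A real < (\<Sum>l<n. service_rate S l)"
begin

abbreviation mu where "mu \<equiv> service_rate S"
abbreviation Sp where "Sp \<equiv> state_space n T"
abbreviation Kp where "Kp \<equiv> policy_kernel n A S T \<gamma> L Y"

definition EA where "EA = measure_pmf.expectation A real"
definition xx :: "(nat \<Rightarrow> nat) \<Rightarrow> nat \<Rightarrow> real" where "xx Q l = real (Q l) / \<gamma> l"
definition V where "V Q = (\<Sum>l<n. real (Q l)^2 / \<gamma> l)"
definition d where "d Q i = 2 * (EA * xx Q i - (\<Sum>l<n. mu l * xx Q l))"
definition G where "G = (\<Sum>l<n. 1 / \<gamma> l)"
definition D where "D = real Am + real Sm"
definition B0 where "B0 = D^2 * G"
definition B3 where "B3 = 2 * EA * D * G + 2 * D * (\<Sum>l<n. mu l / \<gamma> l)"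
definition Kc where "Kc = B0 + real T * B3 + 1"
definition W :: "state \<Rightarrow> real" where
  "W z = (case z of (Q, \<phi>, r) \<Rightarrow> V Q + (\<Sum>j\<in>{r..<T}. d Q (\<phi> ! j)) + real (T - r) * Kc)"
definition Msum where "Msum = (\<Sum>l<n. mu l)"
definition dl where "dl = (1 - EA / Msum) * mu 0"
definition R where "R = (B0 + (real T - 1) * Kc + 1) / (2 * real T * dl)"
definition Mn where "Mn = nat \<lceil>real Sm + (\<Sum>l<n. \<gamma> l) * R\<rceil>"
definition C where "C = {z \<in> Sp. \<forall>l<n. fst z l \<le> Mn}"

lemma EA_nonneg: "EA \<ge> 0"
  unfolding EA_def by (rule Bochner_Integration.integral_nonneg) auto

lemma mu_nonneg: "l < n \<Longrightarrow> mu l \<ge> 0"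
  using mu_pos by (auto intro: less_imp_le)

lemma mu0_le: "l < n \<Longrightarrow> mu 0 \<le> mu l"
  using mu_sorted by auto

lemma Msum_pos: "Msum > 0"
proof -
  have "0 \<in> {..<n}" using n_pos by auto
  then have "mu 0 \<le> Msum" unfolding Msum_def
    by (intro member_le_sum) (auto intro: mu_nonneg)
  then show ?thesis using mu_pos n_pos by fastforce
qed

lemma dl_pos: "dl > 0"
proof -
  have "EA / Msum < 1" using load Msum_pos unfolding EA_def Msum_def by simp
  then show ?thesis unfolding dl_def using mu_pos n_pos by auto
qed

lemma G_nonneg: "G \<ge> 0" unfolding G_def using gamma_pos by (auto intro!: sum_nonneg)
lemma D_nonneg: "D \<ge> 0" unfolding D_def by simp
lemma B0_nonneg: "B0 \<ge> 0" unfolding B0_def using G_nonneg by simp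
lemma B3_nonneg: "B3 \<ge> 0"
proof -
  have "(\<Sum>l<n. mu l / \<gamma> l) \<ge> 0"
  proof (rule sum_nonneg)
    fix l assume "l \<in> {..<n}"
    then show "0 \<le> mu l / \<gamma> l" using mu_nonneg gamma_pos by (simp add: less_imp_le)
  qed
  then show ?thesis unfolding B3_def using G_nonneg D_nonneg EA_nonneg by simp
qed
lemma Kc_pos: "Kc \<ge> 1"
  unfolding Kc_def using B0_nonneg B3_nonneg by simp

lemma C_fin: "finite C" unfolding C_def by (rule fin_bounded_states)
lemma C_sub: "C \<subseteq> Sp" unfolding C_def by auto

lemma qu_in: "(\<forall>i\<ge>n. queue_update n Q a j s i = 0)"
  by (simp add: queue_update_def)

lemma set_K:
  assumes z: "z \<in> Sp"
  shows "set_pmf (Kp z) \<subseteq> {w \<in> Sp. \<forall>l<n. fst w l \<le> (\<Sum>l<n. fst z l) + Am}"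
proof -
  obtain Q \<phi> r where zz: "z = (Q, \<phi>, r)" by (cases z) auto
  have zs: "r < T" "length \<phi> = T" "\<forall>j\<in>set \<phi>. j < n" using z zz by (auto simp: state_space_def)
  have qb: "queue_update n Q a i s l \<le> (\<Sum>l<n. Q l) + Am" if "a \<in> set_pmf A" "l < n" for a i s l
  proof -
    have "queue_update n Q a i s l \<le> Q l + a" using that by (auto simp: queue_update_def)
    moreover have "Q l \<le> (\<Sum>l<n. Q l)" using that by (intro member_le_sum) auto
    moreover have "a \<le> Am" using Abd that by auto
    ultimately show ?thesis by linarith
  qed
  have Yv: "\<forall>\<phi>'\<in>set_pmf (Y \<eta> (service_rate S)). length \<phi>' = T \<and> (\<forall>j\<in>set \<phi>'. j < n)"
    if "\<eta> \<in> set_pmf (L q)" for \<eta> q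
    using that L_valid Y_valid unfolding valid_sorting_def valid_decision_def by blast
  show ?thesis
    using zs qb Yv T_pos
    by (auto simp: zz policy_kernel_def Let_def set_bind_pmf state_space_def queue_update_def
         split: if_splits)
qed

lemma K_fin: "z \<in> Sp \<Longrightarrow> finite (set_pmf (Kp z))"
  by (rule finite_subset[OF set_K fin_bounded_states])

lemma K_clo: "z \<in> Sp \<Longrightarrow> set_pmf (Kp z) \<subseteq> Sp"
  using set_K by blast


lemma qdiff:
  assumes "a \<le> Am" "\<forall>l<n. s l \<le> Sm" "l < n"
  shows "\<bar>real (queue_update n Q a i s l) - real (Q l)\<bar> \<le> D"
  using assms unfolding queue_update_def D_def by (auto simp: of_nat_diff)

lemma qlow:
  assumes "\<forall>l<n. s l \<le> Sm" "l < n"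
  shows "real (queue_update n Q a i s l) \<ge> real (Q l) - real Sm"
  using assms unfolding queue_update_def by (auto simp: of_nat_diff)

lemma xx_low:
  assumes "\<forall>l<n. s l \<le> Sm" "l < n"
  shows "xx (queue_update n Q a i s) l \<ge> (real (Q l) - real Sm) / \<gamma> l"
proof -
  have "\<gamma> l > 0" using gamma_pos assms(2) by auto
  then show ?thesis using qlow[OF assms, of Q a i] unfolding xx_def by (simp add: divide_right_mono)
qed

lemma sq_step:
  fixes q e s c D :: real
  assumes c: "c > 0" and q: "q \<ge> 0" and es: "\<bar>e - s\<bar> \<le> D"
  shows "(max 0 (q + e - s))^2 / c \<le> q^2 / c + 2 * (q / c) * e - 2 * (q / c) * s + D^2 / c"
proof -
  have h1: "(max 0 (q + e - s))^2 \<le> (q + e - s)^2"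
    by (cases "q + e - s \<ge> 0") (auto simp: max_def power2_eq_square)
  have h2: "(q + e - s)^2 = q^2 + 2 * q * e - 2 * q * s + (e - s)^2"
    by (simp add: power2_eq_square algebra_simps)
  have h3: "(e - s)^2 \<le> D^2"
  proof -
    have "(e - s)^2 = \<bar>e - s\<bar>^2" by simp
    also have "\<dots> \<le> D^2" by (rule power_mono[OF es abs_ge_zero])
    finally show ?thesis .
  qed
  have "(max 0 (q + e - s))^2 \<le> q^2 + 2 * q * e - 2 * q * s + D^2"
    using h1 h2 h3 by linarith
  then have "(max 0 (q + e - s))^2 / c \<le> (q^2 + 2 * q * e - 2 * q * s + D^2) / c"
    using c by (intro divide_right_mono) auto
  also have "(q^2 + 2 * q * e - 2 * q * s + D^2) / c = q^2 / c + 2 * (q / c) * e - 2 * (q / c) * s + D^2 / c"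
    by (simp add: add_divide_distrib diff_divide_distrib)
  finally show ?thesis .
qed

lemma V_step:
  assumes a: "a \<le> Am" and s: "\<forall>l<n. s l \<le> Sm" and i: "i < n"
  shows "V (queue_update n Q a i s) \<le> V Q + 2 * xx Q i * real a - 2 * (\<Sum>l<n. xx Q l * real (s l)) + B0"
proof -
  define e where "e l = (if l = i then real a else 0)" for l
  have pt: "real (queue_update n Q a i s l)^2 / \<gamma> l
      \<le> real (Q l)^2 / \<gamma> l + 2 * xx Q l * e l - 2 * xx Q l * real (s l) + D^2 / \<gamma> l"
    if l: "l < n" for l
  proof -
    have eq: "real (queue_update n Q a i s l) = max 0 (real (Q l) + e l - real (s l))"
      using l by (auto simp: queue_update_def e_def of_nat_diff max_def)
    have "\<bar>e l - real (s l)\<bar> \<le> D" using a s l by (auto simp: e_def D_def)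
    then show ?thesis unfolding eq xx_def using gamma_pos l by (intro sq_step) auto
  qed
  have "V (queue_update n Q a i s) \<le> (\<Sum>l<n. real (Q l)^2 / \<gamma> l + 2 * xx Q l * e l - 2 * xx Q l * real (s l) + D^2 / \<gamma> l)"
    unfolding V_def by (intro sum_mono pt) auto
  also have "\<dots> = V Q + 2 * (\<Sum>l<n. xx Q l * e l) - 2 * (\<Sum>l<n. xx Q l * real (s l)) + D^2 * G"
    unfolding V_def G_def by (simp add: sum.distrib sum_subtractf sum_distrib_left algebra_simps)
  also have "(\<Sum>l<n. xx Q l * e l) = xx Q i * real a"
    using i by (simp add: e_def if_distrib sum.delta cong: if_cong)
  finally show ?thesis unfolding B0_def by simp
qed

lemma d_step:
  assumes a: "a \<le> Am" and s: "\<forall>l<n. s l \<le> Sm" and j: "j < n"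
  shows "d (queue_update n Q a i s) j \<le> d Q j + B3"
proof -
  let ?Q' = "queue_update n Q a i s"
  have dx: "\<bar>xx ?Q' l - xx Q l\<bar> \<le> D / \<gamma> l" if "l < n" for l
  proof -
    have "xx ?Q' l - xx Q l = (real (?Q' l) - real (Q l)) / \<gamma> l" unfolding xx_def by (simp add: diff_divide_distrib)
    moreover have g: "\<gamma> l > 0" using gamma_pos that by auto
    moreover have "\<bar>real (?Q' l) - real (Q l)\<bar> \<le> D" using qdiff[OF a s that] .
    ultimately show ?thesis by (simp add: abs_div divide_right_mono)
  qed
  have "D / \<gamma> j \<le> D * G"
  proof -
    have "1 / \<gamma> j \<le> G" unfolding G_def using j gamma_pos by (intro member_le_sum) auto
    then show ?thesis using D_nonneg by (metis mult_left_mono times_divide_eq_right mult_1_right)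
  qed
  then have t1: "EA * (xx ?Q' j - xx Q j) \<le> EA * (D * G)"
    using dx[OF j] EA_nonneg by (intro mult_left_mono) auto
  have t2: "- (\<Sum>l<n. mu l * (xx ?Q' l - xx Q l)) \<le> (\<Sum>l<n. mu l * (D / \<gamma> l))"
  proof -
    have "- (\<Sum>l<n. mu l * (xx ?Q' l - xx Q l)) = (\<Sum>l<n. mu l * (- (xx ?Q' l - xx Q l)))"
      by (simp add: sum_negf[symmetric] algebra_simps)
    also have "\<dots> \<le> (\<Sum>l<n. mu l * (D / \<gamma> l))"
      using dx mu_nonneg by (intro sum_mono mult_left_mono) (auto simp: abs_le_iff)
    finally show ?thesis .
  qed
  have "d ?Q' j - d Q j = 2 * (EA * (xx ?Q' j - xx Q j)) + 2 * (- (\<Sum>l<n. mu l * (xx ?Q' l - xx Q l)))"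
    unfolding d_def by (simp add: algebra_simps sum_subtractf)
  also have "\<dots> \<le> 2 * (EA * (D * G)) + 2 * (\<Sum>l<n. mu l * (D / \<gamma> l))"
    using t1 t2 by linarith
  also have "\<dots> = B3" unfolding B3_def by (simp add: sum_distrib_left algebra_simps)
  finally show ?thesis by simp
qed


lemma exp_abs_bound:
  fixes f :: "'a \<Rightarrow> real"
  assumes "\<And>x. x \<in> set_pmf M \<Longrightarrow> \<bar>f x\<bar> \<le> B"
  shows "\<bar>measure_pmf.expectation M f\<bar> \<le> B"
proof -
  have "\<bar>measure_pmf.expectation M f\<bar> \<le> measure_pmf.expectation M (\<lambda>x. \<bar>f x\<bar>)"
    using integral_norm_bound[of "measure_pmf M" f] by simp
  also have "\<dots> \<le> measure_pmf.expectation M (\<lambda>x. B)"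
    using assms set_pmf_not_empty[of M]
    by (intro integral_mono_AE AE_pmfI pmf_integrable_bounded[where B=B]) force+
  also have "\<dots> = B" by simp
  finally show ?thesis .
qed

lemma intS: "l < n \<Longrightarrow> integrable (measure_pmf S) (\<lambda>s. real (s l))"
  using Sbd by (intro pmf_integrable_bounded[where B="real Sm"]) auto

lemma intA: "integrable (measure_pmf A) (\<lambda>a. real a)"
  using Abd by (intro pmf_integrable_bounded[where B="real Am"]) auto

lemma E_S_lin:
  "measure_pmf.expectation S (\<lambda>s. c - 2 * (\<Sum>l<n. xx Q l * real (s l)))
     = c - 2 * (\<Sum>l<n. xx Q l * mu l)"
proof -
  have i1: "integrable (measure_pmf S) (\<lambda>s. (\<Sum>l<n. xx Q l * real (s l)))"
    by (auto intro!: intS)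
  have "measure_pmf.expectation S (\<lambda>s. c - 2 * (\<Sum>l<n. xx Q l * real (s l)))
     = c - 2 * measure_pmf.expectation S (\<lambda>s. (\<Sum>l<n. xx Q l * real (s l)))"
    using i1 by simp
  also have "measure_pmf.expectation S (\<lambda>s. (\<Sum>l<n. xx Q l * real (s l))) = (\<Sum>l<n. xx Q l * mu l)"
    by (subst Bochner_Integration.integral_sum) (auto intro!: intS simp: service_rate_def)
  finally show ?thesis .
qed

lemma E_AS:
  fixes h :: "nat \<Rightarrow> (nat \<Rightarrow> nat) \<Rightarrow> real"
  assumes i: "i < n"
    and hb: "\<And>a s. a \<in> set_pmf A \<Longrightarrow> s \<in> set_pmf S \<Longrightarrow>
        h a s \<le> V Q + 2 * xx Q i * real a - 2 * (\<Sum>l<n. xx Q l * real (s l)) + Cst"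
    and hbd: "\<And>a s. a \<in> set_pmf A \<Longrightarrow> s \<in> set_pmf S \<Longrightarrow> \<bar>h a s\<bar> \<le> Bh"
  shows "measure_pmf.expectation A (\<lambda>a. measure_pmf.expectation S (\<lambda>s. h a s)) \<le> V Q + d Q i + Cst"
proof -
  have inner: "measure_pmf.expectation S (\<lambda>s. h a s)
      \<le> (V Q + 2 * xx Q i * real a + Cst) - 2 * (\<Sum>l<n. xx Q l * mu l)"
    if a: "a \<in> set_pmf A" for a
  proof -
    have "measure_pmf.expectation S (\<lambda>s. h a s)
        \<le> measure_pmf.expectation S (\<lambda>s. (V Q + 2 * xx Q i * real a + Cst) - 2 * (\<Sum>l<n. xx Q l * real (s l)))"
    proof (rule integral_mono_AE)
      show "integrable (measure_pmf S) (h a)"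
        using hbd a by (intro pmf_integrable_bounded[where B=Bh]) auto
      have i1: "integrable (measure_pmf S) (\<lambda>s. (\<Sum>l<n. xx Q l * real (s l)))"
        by (auto intro!: intS)
      show "integrable (measure_pmf S) (\<lambda>s. (V Q + 2 * xx Q i * real a + Cst) - 2 * (\<Sum>l<n. xx Q l * real (s l)))"
        by (intro Bochner_Integration.integrable_diff measure_pmf.integrable_const integrable_mult_right i1)
      show "AE s in measure_pmf S. h a s \<le> (V Q + 2 * xx Q i * real a + Cst) - 2 * (\<Sum>l<n. xx Q l * real (s l))"
        using hb a by (intro AE_pmfI) (simp add: algebra_simps)
    qed
    also have "\<dots> = (V Q + 2 * xx Q i * real a + Cst) - 2 * (\<Sum>l<n. xx Q l * mu l)"
      by (rule E_S_lin)
    finally show ?thesis .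
  qed
  have "measure_pmf.expectation A (\<lambda>a. measure_pmf.expectation S (\<lambda>s. h a s))
      \<le> measure_pmf.expectation A (\<lambda>a. (V Q + 2 * xx Q i * real a + Cst) - 2 * (\<Sum>l<n. xx Q l * mu l))"
  proof (rule integral_mono_AE)
    show "integrable (measure_pmf A) (\<lambda>a. measure_pmf.expectation S (\<lambda>s. h a s))"
      using hbd by (intro pmf_integrable_bounded[where B=Bh] exp_abs_bound) auto
    show "integrable (measure_pmf A) (\<lambda>a. (V Q + 2 * xx Q i * real a + Cst) - 2 * (\<Sum>l<n. xx Q l * mu l))"
      by (intro Bochner_Integration.integrable_diff Bochner_Integration.integrable_add measure_pmf.integrable_const integrable_mult_right intA)
    show "AE a in measure_pmf A. measure_pmf.expectation S (h a) \<le> (V Q + 2 * xx Q i * real a + Cst) - 2 * (\<Sum>l<n. xx Q l * mu l)"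
      using inner by (intro AE_pmfI) auto
  qed
  also have "\<dots> = V Q + 2 * xx Q i * EA + Cst - 2 * (\<Sum>l<n. xx Q l * mu l)"
    using intA by (simp add: EA_def)
  also have "\<dots> = V Q + d Q i + Cst" unfolding d_def by (simp add: algebra_simps)
  finally show ?thesis .
qed


lemma perm_lt: "\<eta> permutes {..<n} \<Longrightarrow> i < n \<Longrightarrow> \<eta> i < n"
  using permutes_in_image[of \<eta> "{..<n}" i] by simp

lemma count_sum:
  fixes f :: "nat \<Rightarrow> real"
  shows "set xs \<subseteq> {..<n} \<Longrightarrow>
    (\<Sum>v<n. f v * real (length (filter (\<lambda>j. j = v) xs))) = sum_list (map f xs)"
proof (induction xs)
  case Nil
  then show ?case by simp
next
  case (Cons a xs)
  have a: "a < n" using Cons.prems by auto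
  have "(\<Sum>v<n. f v * real (length (filter (\<lambda>j. j = v) (a # xs))))
      = (\<Sum>v<n. f v * real (length (filter (\<lambda>j. j = v) xs)) + (if v = a then f v else 0))"
    by (intro sum.cong) (auto simp: algebra_simps)
  also have "\<dots> = sum_list (map f xs) + f a"
    using Cons a by (simp add: sum.distrib sum.delta')
  finally show ?case by simp
qed

lemma sum_nth_map: "length \<phi> = T \<Longrightarrow> (\<Sum>j\<in>{0..<T}. g (\<phi> ! j)) = sum_list (map g \<phi>)"
  by (simp add: sum_list_sum_nth)

lemma Y_drift:
  assumes eta: "\<eta> permutes {..<n}"
    and sorted: "\<forall>i j. i \<le> j \<and> j < n \<longrightarrow> xx Q' (\<eta> j) \<le> xx Q' (\<eta> i)"
  shows "measure_pmf.expectation (Y \<eta> mu) (\<lambda>\<phi>'. \<Sum>j\<in>{0..<T}. d Q' (\<phi>' ! j))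
     \<le> - 2 * real T * dl * xx Q' (\<eta> 0)"
proof -
  define Msx where "Msx = (\<Sum>l<n. mu l * xx Q' l)"
  define cnt where "cnt v \<phi> = real (length (filter (\<lambda>j. j = v) \<phi>))" for v and \<phi> :: "nat list"
  define f where "f i = dispatch_frac T Y mu i \<eta>" for i
  have Yv: "\<forall>\<phi>'\<in>set_pmf (Y \<eta> mu). length \<phi>' = T \<and> (\<forall>j\<in>set \<phi>'. j < n)"
    using eta Y_valid unfolding valid_decision_def by blast
  have finY: "finite (set_pmf (Y \<eta> mu))"
  proof (rule finite_subset)
    show "set_pmf (Y \<eta> mu) \<subseteq> {xs. set xs \<subseteq> {..<n} \<and> length xs = T}" using Yv by auto
    show "finite {xs. set xs \<subseteq> {..<n} \<and> length xs = T}" by (rule finite_lists_length_eq) auto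
  qed
  have bij: "bij_betw \<eta> {..<n} {..<n}" using eta by (rule permutes_imp_bij)
  have pw: "(\<Sum>j\<in>{0..<T}. d Q' (\<phi>' ! j))
      = (\<Sum>i<n. (2 * EA * real T * xx Q' (\<eta> i)) * (cnt (\<eta> i) \<phi>' / real T)) - 2 * real T * Msx"
    if ph: "\<phi>' \<in> set_pmf (Y \<eta> mu)" for \<phi>'
  proof -
    have len: "length \<phi>' = T" and st: "set \<phi>' \<subseteq> {..<n}" using Yv ph by auto
    have "(\<Sum>j\<in>{0..<T}. d Q' (\<phi>' ! j)) = (\<Sum>j\<in>{0..<T}. 2 * EA * xx Q' (\<phi>' ! j) - 2 * Msx)"
      unfolding d_def Msx_def by (simp add: algebra_simps)
    also have "\<dots> = 2 * EA * (\<Sum>j\<in>{0..<T}. xx Q' (\<phi>' ! j)) - 2 * real T * Msx"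
      by (simp add: sum_subtractf sum_distrib_left)
    also have "(\<Sum>j\<in>{0..<T}. xx Q' (\<phi>' ! j)) = (\<Sum>v<n. xx Q' v * cnt v \<phi>')"
      unfolding cnt_def using count_sum[OF st, of "xx Q'"] sum_nth_map[OF len] by simp
    also have "\<dots> = (\<Sum>i<n. xx Q' (\<eta> i) * cnt (\<eta> i) \<phi>')"
      using sum.reindex_bij_betw[OF bij, of "\<lambda>v. xx Q' v * cnt v \<phi>'"] by simp
    finally show ?thesis using T_pos by (simp add: sum_distrib_left algebra_simps)
  qed
  have "measure_pmf.expectation (Y \<eta> mu) (\<lambda>\<phi>'. \<Sum>j\<in>{0..<T}. d Q' (\<phi>' ! j))
      = measure_pmf.expectation (Y \<eta> mu)
          (\<lambda>\<phi>'. (\<Sum>i<n. (2 * EA * real T * xx Q' (\<eta> i)) * (cnt (\<eta> i) \<phi>' / real T)) - 2 * real T * Msx)"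
    by (intro integral_cong_AE AE_pmfI) (auto simp: pw)
  also have "\<dots> = (\<Sum>i<n. (2 * EA * real T * xx Q' (\<eta> i)) * f i) - 2 * real T * Msx"
  proof -
    have T0: "T \<noteq> 0" using T_pos by auto
    show ?thesis
      using finY T0
      by (simp add: integrable_measure_pmf_finite Bochner_Integration.integral_sum f_def
        dispatch_frac_def cnt_def)
  qed
  also have "\<dots> = 2 * real T * (\<Sum>i<n. xx Q' (\<eta> i) * (EA * f i - mu (\<eta> i)))"
  proof -
    have "Msx = (\<Sum>i<n. mu (\<eta> i) * xx Q' (\<eta> i))"
      unfolding Msx_def using sum.reindex_bij_betw[OF bij, of "\<lambda>v. mu v * xx Q' v"] by simp
    then show ?thesis
      by (simp add: sum_distrib_left sum_subtractf algebra_simps)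
  qed
  also have "\<dots> \<le> 2 * real T * (- dl * xx Q' (\<eta> 0))"
  proof -
    have "(\<Sum>i<n. xx Q' (\<eta> i) * (EA * f i - mu (\<eta> i))) \<le> - dl * xx Q' (\<eta> 0)"
    proof (rule abel[OF n_pos])
      show "\<forall>i j. i \<le> j \<and> j < n \<longrightarrow> xx Q' (\<eta> j) \<le> xx Q' (\<eta> i)" by (rule sorted)
      show "\<forall>i<n. 0 \<le> xx Q' (\<eta> i)"
      proof (intro allI impI)
        fix i assume "i < n"
        then have "\<eta> i < n" using eta perm_lt by blast
        then have "\<gamma> (\<eta> i) > 0" using gamma_pos by auto
        then show "0 \<le> xx Q' (\<eta> i)" unfolding xx_def by simp
      qed
      show "\<forall>m\<in>{1..n}. (\<Sum>i<m. EA * f i - mu (\<eta> i)) \<le> - dl"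
      proof
        fix m assume m: "m \<in> {1..n}"
        define Pm where "Pm = (\<Sum>i<m. mu (\<eta> i))"
        have "(\<Sum>i<m. f i) \<le> Pm / Msum"
          using cond eta m unfolding f_def Pm_def Msum_def by blast
        then have "EA * (\<Sum>i<m. f i) \<le> EA * (Pm / Msum)"
          using EA_nonneg by (rule mult_left_mono)
        moreover have "mu 0 \<le> Pm"
        proof -
          have "0 \<in> {..<m}" using m by auto
          have "mu (\<eta> 0) \<le> Pm" unfolding Pm_def
            using \<open>0 \<in> {..<m}\<close> m eta
            by (intro member_le_sum[where f="\<lambda>i. mu (\<eta> i)"] mu_nonneg) (auto intro: perm_lt)
          moreover have "mu 0 \<le> mu (\<eta> 0)" using eta n_pos by (intro mu0_le) (auto intro: perm_lt)
          ultimately show ?thesis by linarith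
        qed
        moreover have "1 - EA / Msum > 0"
          using load Msum_pos unfolding EA_def Msum_def by simp
        ultimately have "EA * (\<Sum>i<m. f i) - Pm \<le> - dl"
        proof -
          assume h1: "EA * (\<Sum>i<m. f i) \<le> EA * (Pm / Msum)" and h2: "mu 0 \<le> Pm" and h3: "1 - EA / Msum > 0"
          have "EA * (Pm / Msum) - Pm = - ((1 - EA / Msum) * Pm)" by (simp add: algebra_simps)
          also have "\<dots> \<le> - ((1 - EA / Msum) * mu 0)" using h2 h3 by simp
          finally show ?thesis using h1 unfolding dl_def by linarith
        qed
        then show "(\<Sum>i<m. EA * f i - mu (\<eta> i)) \<le> - dl"
          unfolding Pm_def by (simp add: sum_subtractf sum_distrib_left)
      qed
    qed
    then show ?thesis using T_pos by (intro mult_left_mono) auto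
  qed
  finally show ?thesis by simp
qed


lemma exp_le_bound:
  fixes f :: "'a \<Rightarrow> real"
  assumes "finite (set_pmf M)" "\<And>x. x \<in> set_pmf M \<Longrightarrow> f x \<le> c"
  shows "measure_pmf.expectation M f \<le> c"
proof -
  have "measure_pmf.expectation M f \<le> measure_pmf.expectation M (\<lambda>x. c)"
    using assms by (intro integral_mono_AE AE_pmfI integrable_measure_pmf_finite) auto
  then show ?thesis by simp
qed

lemma finL: "finite (set_pmf (L q))"
proof (rule finite_subset)
  show "set_pmf (L q) \<subseteq> {p. p permutes {..<n}}" using L_valid unfolding valid_sorting_def by blast
  show "finite {p. p permutes {..<n}}" by (rule finite_permutations) auto
qed

lemma finY: "\<eta> permutes {..<n} \<Longrightarrow> finite (set_pmf (Y \<eta> mu))"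
proof (rule finite_subset)
  assume eta: "\<eta> permutes {..<n}"
  show "set_pmf (Y \<eta> mu) \<subseteq> {xs. set xs \<subseteq> {..<n} \<and> length xs = T}"
    using eta Y_valid unfolding valid_decision_def by auto
  show "finite {xs. set xs \<subseteq> {..<n} \<and> length xs = T}" by (rule finite_lists_length_eq) auto
qed

lemma boundary_inner:
  assumes l: "l < n"
  shows "measure_pmf.expectation (L (\<lambda>i. real (Q' i) / \<gamma> i))
           (\<lambda>\<eta>. measure_pmf.expectation (Y \<eta> mu) (\<lambda>\<phi>'. W (Q', \<phi>', 0)))
         \<le> V Q' + real T * Kc - 2 * real T * dl * xx Q' l"
proof (rule exp_le_bound[OF finL])
  fix \<eta> assume eta_in: "\<eta> \<in> set_pmf (L (\<lambda>i. real (Q' i) / \<gamma> i))"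
  have eta: "\<eta> permutes {..<n}" and sorted: "\<forall>i j. i \<le> j \<and> j < n \<longrightarrow> xx Q' (\<eta> j) \<le> xx Q' (\<eta> i)"
    using L_valid eta_in unfolding valid_sorting_def xx_def by blast+
  have "measure_pmf.expectation (Y \<eta> mu) (\<lambda>\<phi>'. W (Q', \<phi>', 0))
      = measure_pmf.expectation (Y \<eta> mu) (\<lambda>\<phi>'. (V Q' + real T * Kc) + (\<Sum>j\<in>{0..<T}. d Q' (\<phi>' ! j)))"
    by (intro integral_cong_AE AE_pmfI) (auto simp: W_def)
  also have "\<dots> = V Q' + real T * Kc + measure_pmf.expectation (Y \<eta> mu) (\<lambda>\<phi>'. (\<Sum>j\<in>{0..<T}. d Q' (\<phi>' ! j)))"
    using finY[OF eta] by (simp add: integrable_measure_pmf_finite)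
  also have "\<dots> \<le> V Q' + real T * Kc - 2 * real T * dl * xx Q' (\<eta> 0)"
    using Y_drift[OF eta sorted] by simp
  also have "\<dots> \<le> V Q' + real T * Kc - 2 * real T * dl * xx Q' l"
  proof -
    have "l \<in> \<eta> ` {..<n}" using permutes_image[OF eta] l by auto
    then obtain k where k: "k < n" "l = \<eta> k" by auto
    then have "xx Q' l \<le> xx Q' (\<eta> 0)" using sorted by auto
    then show ?thesis using dl_pos T_pos by (simp add: mult_left_mono)
  qed
  finally show "measure_pmf.expectation (Y \<eta> mu) (\<lambda>\<phi>'. W (Q', \<phi>', 0))
      \<le> V Q' + real T * Kc - 2 * real T * dl * xx Q' l" .
qed

lemma W_lower:
  assumes z: "z \<in> Sp"
  shows "W z \<ge> - (\<Sum>l<n. (real T * mu l)^2 / \<gamma> l)"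
proof -
  obtain Q \<phi> r where zz: "z = (Q, \<phi>, r)" by (cases z) auto
  have zs: "r < T" "length \<phi> = T" "\<forall>j\<in>set \<phi>. j < n" using z zz by (auto simp: state_space_def)
  define Msx where "Msx = (\<Sum>l<n. mu l * xx Q l)"
  have xnn: "i < n \<Longrightarrow> xx Q i \<ge> 0" for i using gamma_pos by (auto simp: xx_def less_imp_le)
  have Msx_nn: "Msx \<ge> 0" unfolding Msx_def using xnn mu_nonneg by (auto intro!: sum_nonneg)
  have dlow: "d Q (\<phi> ! j) \<ge> - 2 * Msx" if "j \<in> {r..<T}" for j
  proof -
    have "\<phi> ! j < n" using zs that by auto
    then have "EA * xx Q (\<phi> ! j) \<ge> 0" using EA_nonneg xnn by auto
    then show ?thesis unfolding d_def Msx_def by simp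
  qed
  have "(\<Sum>j\<in>{r..<T}. d Q (\<phi> ! j)) \<ge> (\<Sum>j\<in>{r..<T}. - 2 * Msx)"
    by (intro sum_mono dlow)
  moreover have "(\<Sum>j\<in>{r..<T}. - 2 * Msx) \<ge> - 2 * real T * Msx"
    using Msx_nn by (simp add: mult_right_mono)
  moreover have "V Q - 2 * real T * Msx \<ge> - (\<Sum>l<n. (real T * mu l)^2 / \<gamma> l)"
  proof -
    have "V Q - 2 * real T * Msx = (\<Sum>l<n. (real (Q l)^2 - 2 * real T * mu l * real (Q l)) / \<gamma> l)"
      unfolding V_def Msx_def xx_def
      by (simp add: sum_subtractf sum_distrib_left diff_divide_distrib algebra_simps)
    also have "\<dots> \<ge> (\<Sum>l<n. - ((real T * mu l)^2) / \<gamma> l)"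
    proof (intro sum_mono divide_right_mono)
      fix l assume "l \<in> {..<n}"
      then show "0 \<le> \<gamma> l" using gamma_pos by (auto simp: less_imp_le)
      have "0 \<le> (real (Q l) - real T * mu l)^2" by simp
      then show "- ((real T * mu l)^2) \<le> real (Q l)^2 - 2 * real T * mu l * real (Q l)"
        by (simp add: power2_eq_square algebra_simps)
    qed
    finally show ?thesis by (simp add: sum_negf)
  qed
  moreover have "real (T - r) * Kc \<ge> 0" using Kc_pos by simp
  ultimately show ?thesis unfolding zz W_def by simp
qed

lemma kernel_eq:
  "Kp (Q, \<phi>, r) = bind_pmf A (\<lambda>a. bind_pmf S (\<lambda>s.
       if Suc r < T then return_pmf (queue_update n Q a (\<phi> ! r) s, \<phi>, Suc r)
       else bind_pmf (L (\<lambda>i. real (queue_update n Q a (\<phi> ! r) s i) / \<gamma> i)) (\<lambda>\<eta>.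
              bind_pmf (Y \<eta> mu) (\<lambda>\<phi>'. return_pmf (queue_update n Q a (\<phi> ! r) s, \<phi>', 0)))))"
  by (simp add: policy_kernel_def Let_def)

lemma drift:
  assumes z: "z \<in> Sp" and nC: "z \<notin> C"
  shows "measure_pmf.expectation (Kp z) W \<le> W z - 1"
proof -
  obtain Q \<phi> r where zz: "z = (Q, \<phi>, r)" by (cases z) auto
  have zs: "r < T" "length \<phi> = T" "\<forall>j\<in>set \<phi>. j < n" using z zz by (auto simp: state_space_def)
  define i where "i = \<phi> ! r"
  have i: "i < n" using zs unfolding i_def by auto
  define H where "H a s = (if Suc r < T then return_pmf (queue_update n Q a i s, \<phi>, Suc r)
       else bind_pmf (L (\<lambda>j. real (queue_update n Q a i s j) / \<gamma> j)) (\<lambda>\<eta>.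
              bind_pmf (Y \<eta> mu) (\<lambda>\<phi>'. return_pmf (queue_update n Q a i s, \<phi>', 0))))" for a s
  have Keq: "Kp z = bind_pmf A (\<lambda>a. bind_pmf S (\<lambda>s. H a s))"
    unfolding zz kernel_eq H_def i_def ..
  have finK: "finite (set_pmf (Kp z))" using K_fin[OF z] .
  have subH: "set_pmf (H a s) \<subseteq> set_pmf (Kp z)"
    if "a \<in> set_pmf A" "s \<in> set_pmf S" for a s
    using that unfolding Keq by (auto simp: set_bind_pmf)
  have finH: "finite (set_pmf (H a s))"
    if "a \<in> set_pmf A" "s \<in> set_pmf S" for a s
    using finite_subset[OF subH[OF that] finK] .
  define Bh where "Bh = (\<Sum>w\<in>set_pmf (Kp z). \<bar>W w\<bar>)"
  have hbd: "\<bar>measure_pmf.expectation (H a s) W\<bar> \<le> Bh" if "a \<in> set_pmf A" "s \<in> set_pmf S" for a s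
    using subH[OF that] finK unfolding Bh_def
    by (intro exp_abs_bound) (auto intro: member_le_sum[where f="\<lambda>w. \<bar>W w\<bar>"])
  have E1: "measure_pmf.expectation (Kp z) W
      = measure_pmf.expectation A (\<lambda>a. measure_pmf.expectation S (\<lambda>s. measure_pmf.expectation (H a s) W))"
  proof -
    have "measure_pmf.expectation (Kp z) W
        = measure_pmf.expectation A (\<lambda>a. measure_pmf.expectation (bind_pmf S (\<lambda>s. H a s)) W)"
      unfolding Keq by (rule expectation_bind_fin) (use finK Keq in simp)
    also have "\<dots> = measure_pmf.expectation A (\<lambda>a. measure_pmf.expectation S (\<lambda>s. measure_pmf.expectation (H a s) W))"
    proof (intro integral_cong_AE AE_pmfI)
      fix a assume a: "a \<in> set_pmf A"
      show "measure_pmf.expectation (bind_pmf S (\<lambda>s. H a s)) W = measure_pmf.expectation S (\<lambda>s. measure_pmf.expectation (H a s) W)"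
        by (rule expectation_bind_fin) (use finite_bind_sub[OF _ a, of "\<lambda>a. bind_pmf S (\<lambda>s. H a s)"] finK Keq in simp)
    qed auto
    finally show ?thesis .
  qed
  show ?thesis
  proof (cases "Suc r < T")
    case True
    define Cst where "Cst = B0 + (\<Sum>j\<in>{Suc r..<T}. d Q (\<phi> ! j)) + real (T - Suc r) * (B3 + Kc)"
    have hb: "measure_pmf.expectation (H a s) W
        \<le> V Q + 2 * xx Q i * real a - 2 * (\<Sum>l<n. xx Q l * real (s l)) + Cst"
      if a: "a \<in> set_pmf A" and s: "s \<in> set_pmf S" for a s
    proof -
      have aa: "a \<le> Am" and ss: "\<forall>l<n. s l \<le> Sm" using a s Abd Sbd by auto
      let ?Q' = "queue_update n Q a i s"
      have "measure_pmf.expectation (H a s) W = W (?Q', \<phi>, Suc r)" using True by (simp add: H_def)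
      also have "\<dots> = V ?Q' + (\<Sum>j\<in>{Suc r..<T}. d ?Q' (\<phi> ! j)) + real (T - Suc r) * Kc"
        by (simp add: W_def)
      also have "\<dots> \<le> (V Q + 2 * xx Q i * real a - 2 * (\<Sum>l<n. xx Q l * real (s l)) + B0)
            + (\<Sum>j\<in>{Suc r..<T}. d Q (\<phi> ! j) + B3) + real (T - Suc r) * Kc"
      proof -
        have "V ?Q' \<le> V Q + 2 * xx Q i * real a - 2 * (\<Sum>l<n. xx Q l * real (s l)) + B0"
          by (rule V_step[OF aa ss i])
        moreover have "(\<Sum>j\<in>{Suc r..<T}. d ?Q' (\<phi> ! j)) \<le> (\<Sum>j\<in>{Suc r..<T}. d Q (\<phi> ! j) + B3)"
          using zs by (intro sum_mono d_step[OF aa ss]) auto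
        ultimately show ?thesis by linarith
      qed
      also have "\<dots> = V Q + 2 * xx Q i * real a - 2 * (\<Sum>l<n. xx Q l * real (s l)) + Cst"
        unfolding Cst_def by (simp add: sum.distrib algebra_simps)
      finally show ?thesis .
    qed
    have "measure_pmf.expectation (Kp z) W \<le> V Q + d Q i + Cst"
      unfolding E1 by (rule E_AS[OF i hb hbd])
    also have "\<dots> \<le> W z - 1"
    proof -
      have Wz: "W z = V Q + d Q i + (\<Sum>j\<in>{Suc r..<T}. d Q (\<phi> ! j)) + (real (T - Suc r) + 1) * Kc"
        using zs True by (simp add: zz W_def i_def sum.atLeast_Suc_lessThan Suc_diff_Suc)
      have "real (T - Suc r) * B3 \<le> real T * B3" using B3_nonneg by (intro mult_right_mono) auto
      then show ?thesis unfolding Wz Cst_def Kc_def by (simp add: algebra_simps)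
    qed
    finally show ?thesis .
  next
    case False
    then have rT: "Suc r = T" using zs by auto
    obtain l where l: "l < n" "Q l > Mn" using nC z zz unfolding C_def by auto
    define Cst where "Cst = B0 + real T * Kc - 2 * real T * dl * ((real (Q l) - real Sm) / \<gamma> l)"
    have hb: "measure_pmf.expectation (H a s) W
        \<le> V Q + 2 * xx Q i * real a - 2 * (\<Sum>l<n. xx Q l * real (s l)) + Cst"
      if a: "a \<in> set_pmf A" and s: "s \<in> set_pmf S" for a s
    proof -
      have aa: "a \<le> Am" and ss: "\<forall>l<n. s l \<le> Sm" using a s Abd Sbd by auto
      let ?Q' = "queue_update n Q a i s"
      have fH: "finite (set_pmf (H a s))" using finH[OF a s] .
      have "measure_pmf.expectation (H a s) W
          = measure_pmf.expectation (L (\<lambda>j. real (?Q' j) / \<gamma> j))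
              (\<lambda>\<eta>. measure_pmf.expectation (bind_pmf (Y \<eta> mu) (\<lambda>\<phi>'. return_pmf (?Q', \<phi>', 0))) W)"
        using False fH unfolding H_def by (simp add: expectation_bind_fin)
      also have "\<dots> = measure_pmf.expectation (L (\<lambda>j. real (?Q' j) / \<gamma> j))
              (\<lambda>\<eta>. measure_pmf.expectation (Y \<eta> mu) (\<lambda>\<phi>'. W (?Q', \<phi>', 0)))"
      proof (intro integral_cong_AE AE_pmfI)
        fix \<eta> assume eta_in: "\<eta> \<in> set_pmf (L (\<lambda>j. real (?Q' j) / \<gamma> j))"
        have eta: "\<eta> permutes {..<n}" using L_valid eta_in unfolding valid_sorting_def by blast
        have fb: "finite (set_pmf (bind_pmf (Y \<eta> mu) (\<lambda>\<phi>'. return_pmf (?Q', \<phi>', 0))))"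
          using finY[OF eta] by (simp add: set_bind_pmf)
        show "measure_pmf.expectation (bind_pmf (Y \<eta> mu) (\<lambda>\<phi>'. return_pmf (?Q', \<phi>', 0))) W
            = measure_pmf.expectation (Y \<eta> mu) (\<lambda>\<phi>'. W (?Q', \<phi>', 0))"
          using expectation_bind_fin[OF fb, of W] by simp
      qed auto
      also have "\<dots> \<le> V ?Q' + real T * Kc - 2 * real T * dl * xx ?Q' l"
        by (rule boundary_inner[OF l(1)])
      also have "\<dots> \<le> (V Q + 2 * xx Q i * real a - 2 * (\<Sum>l<n. xx Q l * real (s l)) + B0)
           + real T * Kc - 2 * real T * dl * ((real (Q l) - real Sm) / \<gamma> l)"
      proof -
        have "V ?Q' \<le> V Q + 2 * xx Q i * real a - 2 * (\<Sum>l<n. xx Q l * real (s l)) + B0"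
          by (rule V_step[OF aa ss i])
        moreover have "2 * real T * dl * ((real (Q l) - real Sm) / \<gamma> l) \<le> 2 * real T * dl * xx ?Q' l"
          using xx_low[OF ss l(1), of Q a i] dl_pos T_pos by (intro mult_left_mono) auto
        ultimately show ?thesis by linarith
      qed
      also have "\<dots> = V Q + 2 * xx Q i * real a - 2 * (\<Sum>l<n. xx Q l * real (s l)) + Cst"
        unfolding Cst_def by simp
      finally show ?thesis .
    qed
    have "measure_pmf.expectation (Kp z) W \<le> V Q + d Q i + Cst"
      unfolding E1 by (rule E_AS[OF i hb hbd])
    also have "\<dots> \<le> W z - 1"
    proof -
      have Wz: "W z = V Q + d Q i + Kc"
        using rT by (auto simp: zz W_def i_def)
      have gl: "\<gamma> l > 0" using gamma_pos l by auto
      have Rnn: "R \<ge> 0" unfolding R_def using B0_nonneg Kc_pos T_pos dl_pos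
        by (intro divide_nonneg_pos) auto
      have "\<gamma> l \<le> (\<Sum>l<n. \<gamma> l)" using l gamma_pos by (intro member_le_sum) (auto simp: less_imp_le)
      then have "\<gamma> l * R \<le> (\<Sum>l<n. \<gamma> l) * R" using Rnn by (rule mult_right_mono)
      moreover have "real Sm + (\<Sum>l<n. \<gamma> l) * R \<le> real Mn" unfolding Mn_def by linarith
      moreover have "real Mn < real (Q l)" using l by simp
      ultimately have "\<gamma> l * R \<le> real (Q l) - real Sm" by linarith
      then have "R \<le> (real (Q l) - real Sm) / \<gamma> l" using gl by (simp add: field_simps)
      then have "2 * real T * dl * R \<le> 2 * real T * dl * ((real (Q l) - real Sm) / \<gamma> l)"
        using dl_pos T_pos by (intro mult_left_mono) auto
      moreover have "2 * real T * dl * R = B0 + (real T - 1) * Kc + 1"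
        unfolding R_def using dl_pos T_pos by simp
      ultimately show ?thesis unfolding Wz Cst_def by (simp add: algebra_simps)
    qed
    finally show ?thesis .
  qed
qed

theorem main: "positive_recurrent Kp Sp"
  apply (rule foster[where W=W and C=C and b="\<Sum>l<n. (real T * mu l)^2 / \<gamma> l"])
       apply (erule K_fin)
      apply (erule K_clo)
     apply (erule W_lower)
    apply (erule (1) drift)
   apply (rule C_fin)
  apply (rule C_sub)
  done

end

theorem corollary1:
  fixes n T :: nat and A :: "nat pmf" and S :: "(nat \<Rightarrow> nat) pmf"
    and \<gamma> :: "nat \<Rightarrow> real"
    and L :: "(nat \<Rightarrow> real) \<Rightarrow> (nat \<Rightarrow> nat) pmf"
    and Y :: "(nat \<Rightarrow> nat) \<Rightarrow> (nat \<Rightarrow> real) \<Rightarrow> nat list pmf"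
  assumes n_pos: "n \<ge> 1"
    and A_bounded: "\<exists>Amax::nat. \<forall>a\<in>set_pmf A. a \<le> n * Amax"
    and S_bounded: "\<exists>Smax::nat. \<forall>s\<in>set_pmf S. \<forall>l<n. s l \<le> Smax"
    and mu_pos: "\<forall>l<n. service_rate S l > 0"
    and mu_sorted: "\<forall>l m. l \<le> m \<and> m < n \<longrightarrow> service_rate S l \<le> service_rate S m"
    and T_pos: "T \<ge> 1"
    and gamma_pos: "\<forall>l<n. \<gamma> l > 0"
    and L_valid: "valid_sorting n L"
    and Y_valid: "valid_decision n T Y (service_rate S)"
    and cond: "\<forall>\<eta>. \<eta> permutes {..<n} \<longrightarrow> (\<forall>m\<in>{1..n}.
                 (\<Sum>l<m. dispatch_frac T Y (service_rate S) l \<eta>)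
                   \<le> (\<Sum>l<m. service_rate S (\<eta> l)) / (\<Sum>l<n. service_rate S l))"
    and load: "measure_pmf.expectation A real < (\<Sum>l<n. service_rate S l)"
  shows "positive_recurrent (policy_kernel n A S T \<gamma> L Y) (state_space n T)"
  proof -
  obtain Amax :: nat where Am: "\<forall>a\<in>set_pmf A. a \<le> n * Amax" using A_bounded by blast
  obtain Smax :: nat where Sm: "\<forall>s\<in>set_pmf S. \<forall>l<n. s l \<le> Smax" using S_bounded by blast
  interpret qs n T A S \<gamma> L Y "n * Amax" Smax
    using n_pos Am Sm mu_pos mu_sorted T_pos gamma_pos L_valid Y_valid cond load
    by unfold_locales auto
  show ?thesis by (rule main)
qed

end
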